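(* Let $\mathbf{p}$ be a list of explainable predicate constants, let $R$ be an S-rule $L_1\leftrightarrow L_2\Leftarrow G$, and let $R_1$, $R_2$ be the D-rules $L_1\lor\overline{L_2}\Leftarrow G$ and $\overline{L_1}\lor L_2\Leftarrow G$. Then the conjunction $CC$ of completeness constraints for $\mathbf{p}$ intuitionistically entails $\mathrm{tr}_s[R]\leftrightarrow\mathrm{tr}_d[R_1]\land\mathrm{tr}_d[R_2]$.
   Context: $G$ is a first-order formula without $\to$; $L_1,L_2$ are literals whose predicate symbols belong to $\mathbf{p}$; $\overline{L}$ denotes the literal complementary to $L$ (i.e. $\overline{A}=\neg A$, $\overline{\neg A}=A$). For each $p\in\mathbf{p}$, $\widehat p$ is a new predicate constant of the same arity; for $A=p(\mathbf{t})$, $\widehat A=\widehat p(\mathbf{t})$; $\widetilde\forall$ is universal closure. $\mathrm{tr}_s[p_1(\mathbf{t}^1)\leftrightarrow p_2(\mathbf{t}^2)\Leftarrow G]=\mathrm{tr}_s[\neg p_1(\mathbf{t}^1)\leftrightarrow\neg p_2(\mathbf{t}^2)\Leftarrow G]$ is the conjunction of $\widetilde\forall(\neg\neg G\land p_1(\mathbf{t}^1)\to p_2(\mathbf{t}^2))$, $\widetilde\forall(\neg\neg G\land p_2(\mathbf{t}^2)\to p_1(\mathbf{t}^1))$, $\widetilde\forall(\neg\neg G\land \widehat{p_1}(\mathbf{t}^1)\to \widehat{p_2}(\mathbf{t}^2))$, $\widetilde\forall(\neg\neg G\land \widehat{p_2}(\mathbf{t}^2)\to \widehat{p_1}(\mathbf{t}^1))$;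 $\mathrm{tr}_s[\neg p_1(\mathbf{t}^1)\leftrightarrow p_2(\mathbf{t}^2)\Leftarrow G]=\mathrm{tr}_s[p_1(\mathbf{t}^1)\leftrightarrow\neg p_2(\mathbf{t}^2)\Leftarrow G]$ is the conjunction of $\widetilde\forall(\neg\neg G\land \widehat{p_1}(\mathbf{t}^1)\to p_2(\mathbf{t}^2))$, $\widetilde\forall(\neg\neg G\land p_2(\mathbf{t}^2)\to \widehat{p_1}(\mathbf{t}^1))$, $\widetilde\forall(\neg\neg G\land p_1(\mathbf{t}^1)\to \widehat{p_2}(\mathbf{t}^2))$, $\widetilde\forall(\neg\neg G\land \widehat{p_2}(\mathbf{t}^2)\to p_1(\mathbf{t}^1))$. For a D-rule $\bigvee_{A\in Pos}A\lor\bigvee_{A\in Neg}\neg A\Leftarrow G$ ($Pos,Neg$ sets of atoms), $\mathrm{tr}_d$ gives $\widetilde\forall\big(\neg\neg G\land\bigwedge_{A\in Pos}(\widehat A\lor\neg\widehat A)\land\bigwedge_{A\in Neg}(A\lor\neg A)\to\bigvee_{A\in Pos}A\lor\bigvee_{A\in Neg}\widehat A\big)$. $CC$ is the conjunction over $p\in\mathbf{p}$ of $\forall\mathbf{x}\neg(p(\mathbf{x})\land\widehat p(\mathbf{x}))$ and $\forall\mathbf{x}\neg(\neg p(\mathbf{x})\land\neg\widehat p(\mathbf{x}))$. Entailment is in first-order intuitionistic logic. *)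

theory Defs
  imports Main
begin

type_synonym var = nat

datatype trm = Var var | Fn string "trm list"

text \<open>Predicate symbols: original predicate constants (name, arity) and, for each of
them, the new "hat" predicate constant of the same arity.\<close>
datatype psym = Orig string nat | Hat string nat

datatype frm =
    Bot
  | Atom psym "trm list"
  | Neg frm
  | Conj frm frm
  | Disj frm frm
  | Imp frm frm
  | All var frm
  | Ex var frm

definition Iff :: "frm \<Rightarrow> frm \<Rightarrow> frm" where
  "Iff a b = Conj (Imp a b) (Imp b a)"

definition Top :: frm where "Top = Neg Bot"

fun conj_list :: "frm list \<Rightarrow> frm" where
  "conj_list [] = Top"
| "conj_list [a] = a"
| "conj_list (a # as) = Conj a (conj_list as)"

fun disj_list :: "frm list \<Rightarrow> frm" where
  "disj_list [] = Bot"
| "disj_list [a] = a"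
| "disj_list (a # as) = Disj a (disj_list as)"

fun fvt :: "trm \<Rightarrow> var set" where
  "fvt (Var x) = {x}"
| "fvt (Fn f ts) = (\<Union>t\<in>set ts. fvt t)"

fun fv :: "frm \<Rightarrow> var set" where
  "fv Bot = {}"
| "fv (Atom P ts) = (\<Union>t\<in>set ts. fvt t)"
| "fv (Neg a) = fv a"
| "fv (Conj a b) = fv a \<union> fv b"
| "fv (Disj a b) = fv a \<union> fv b"
| "fv (Imp a b) = fv a \<union> fv b"
| "fv (All x a) = fv a - {x}"
| "fv (Ex x a) = fv a - {x}"

definition uclose :: "frm \<Rightarrow> frm" where
  "uclose a = foldr All (sorted_list_of_set (fv a)) a"

fun no_imp :: "frm \<Rightarrow> bool" where
  "no_imp Bot = True"
| "no_imp (Atom P ts) = True"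
| "no_imp (Neg a) = no_imp a"
| "no_imp (Conj a b) = (no_imp a \<and> no_imp b)"
| "no_imp (Disj a b) = (no_imp a \<and> no_imp b)"
| "no_imp (Imp a b) = False"
| "no_imp (All x a) = no_imp a"
| "no_imp (Ex x a) = no_imp a"

fun no_hat :: "frm \<Rightarrow> bool" where
  "no_hat Bot = True"
| "no_hat (Atom P ts) = (case P of Orig _ _ \<Rightarrow> True | Hat _ _ \<Rightarrow> False)"
| "no_hat (Neg a) = no_hat a"
| "no_hat (Conj a b) = (no_hat a \<and> no_hat b)"
| "no_hat (Disj a b) = (no_hat a \<and> no_hat b)"
| "no_hat (Imp a b) = (no_hat a \<and> no_hat b)"
| "no_hat (All x a) = no_hat a"
| "no_hat (Ex x a) = no_hat a"

datatype lit = PosL psym "trm list" | NegL psym "trm list"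

fun hat :: "psym \<Rightarrow> psym" where
  "hat (Orig n k) = Hat n k"
| "hat (Hat n k) = Hat n k"

fun compl :: "lit \<Rightarrow> lit" where
  "compl (PosL p ts) = NegL p ts"
| "compl (NegL p ts) = PosL p ts"

fun lit_in :: "(string \<times> nat) list \<Rightarrow> lit \<Rightarrow> bool" where
  "lit_in ps (PosL P ts) = (\<exists>n. P = Orig n (length ts) \<and> (n, length ts) \<in> set ps)"
| "lit_in ps (NegL P ts) = (\<exists>n. P = Orig n (length ts) \<and> (n, length ts) \<in> set ps)"

definition rclause :: "frm \<Rightarrow> frm \<Rightarrow> frm \<Rightarrow> frm" where
  "rclause g a b = uclose (Imp (Conj (Neg (Neg g)) a) b)"

text \<open>\<open>tr_s\<close> of the S-rule \<open>L1 \<leftrightarrow> L2 \<Leftarrow> G\<close>.\<close>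
fun tr_s :: "lit \<Rightarrow> lit \<Rightarrow> frm \<Rightarrow> frm" where
  "tr_s (PosL p1 t1) (PosL p2 t2) g =
     conj_list [rclause g (Atom p1 t1) (Atom p2 t2), rclause g (Atom p2 t2) (Atom p1 t1),
                rclause g (Atom (hat p1) t1) (Atom (hat p2) t2),
                rclause g (Atom (hat p2) t2) (Atom (hat p1) t1)]"
| "tr_s (NegL p1 t1) (NegL p2 t2) g =
     conj_list [rclause g (Atom p1 t1) (Atom p2 t2), rclause g (Atom p2 t2) (Atom p1 t1),
                rclause g (Atom (hat p1) t1) (Atom (hat p2) t2),
                rclause g (Atom (hat p2) t2) (Atom (hat p1) t1)]"
| "tr_s (NegL p1 t1) (PosL p2 t2) g =
     conj_list [rclause g (Atom (hat p1) t1) (Atom p2 t2), rclause g (Atom p2 t2) (Atom (hat p1) t1),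
                rclause g (Atom p1 t1) (Atom (hat p2) t2),
                rclause g (Atom (hat p2) t2) (Atom p1 t1)]"
| "tr_s (PosL p1 t1) (NegL p2 t2) g =
     conj_list [rclause g (Atom (hat p1) t1) (Atom p2 t2), rclause g (Atom p2 t2) (Atom (hat p1) t1),
                rclause g (Atom p1 t1) (Atom (hat p2) t2),
                rclause g (Atom (hat p2) t2) (Atom p1 t1)]"

fun pos_atoms :: "lit list \<Rightarrow> (psym \<times> trm list) list" where
  "pos_atoms [] = []"
| "pos_atoms (PosL p ts # ls) = (p, ts) # pos_atoms ls"
| "pos_atoms (NegL p ts # ls) = pos_atoms ls"

fun neg_atoms :: "lit list \<Rightarrow> (psym \<times> trm list) list" where
  "neg_atoms [] = []"
| "neg_atoms (PosL p ts # ls) = neg_atoms ls"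
| "neg_atoms (NegL p ts # ls) = (p, ts) # neg_atoms ls"

text \<open>\<open>tr_d\<close> of the D-rule \<open>\<Or>head \<Leftarrow> G\<close>.\<close>
definition tr_d :: "lit list \<Rightarrow> frm \<Rightarrow> frm" where
  "tr_d hs g = uclose (Imp
     (Conj (Neg (Neg g))
        (conj_list (map (\<lambda>(p, ts). Disj (Atom (hat p) ts) (Neg (Atom (hat p) ts))) (pos_atoms hs)
                  @ map (\<lambda>(p, ts). Disj (Atom p ts) (Neg (Atom p ts))) (neg_atoms hs))))
     (disj_list (map (\<lambda>(p, ts). Atom p ts) (pos_atoms hs)
                 @ map (\<lambda>(p, ts). Atom (hat p) ts) (neg_atoms hs))))"

definition CC :: "(string \<times> nat) list \<Rightarrow> frm" where
  "CC ps = conj_list (map (\<lambda>(n, k).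
      Conj (foldr All [0..<k] (Neg (Conj (Atom (Orig n k) (map Var [0..<k]))
                                         (Atom (Hat n k) (map Var [0..<k])))))
           (foldr All [0..<k] (Neg (Conj (Neg (Atom (Orig n k) (map Var [0..<k])))
                                         (Neg (Atom (Hat n k) (map Var [0..<k]))))))) ps)"

definition kripke_model ::
  "('w \<Rightarrow> 'w \<Rightarrow> bool) \<Rightarrow> ('w \<Rightarrow> 'u set) \<Rightarrow> (string \<Rightarrow> 'u list \<Rightarrow> 'u)
     \<Rightarrow> ('w \<Rightarrow> psym \<Rightarrow> 'u list \<Rightarrow> bool) \<Rightarrow> bool" where
  "kripke_model le D fn I \<longleftrightarrow>
     (\<forall>w. le w w) \<and> (\<forall>u v w. le u v \<longrightarrow> le v w \<longrightarrow> le u w) \<and>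
     (\<forall>w. D w \<noteq> {}) \<and> (\<forall>w v. le w v \<longrightarrow> D w \<subseteq> D v) \<and>
     (\<forall>w f as. set as \<subseteq> D w \<longrightarrow> fn f as \<in> D w) \<and>
     (\<forall>w v P as. le w v \<longrightarrow> I w P as \<longrightarrow> I v P as)"

fun evalt :: "(string \<Rightarrow> 'u list \<Rightarrow> 'u) \<Rightarrow> (var \<Rightarrow> 'u) \<Rightarrow> trm \<Rightarrow> 'u" where
  "evalt fn e (Var x) = e x"
| "evalt fn e (Fn f ts) = fn f (map (evalt fn e) ts)"

fun forces ::
  "('w \<Rightarrow> 'w \<Rightarrow> bool) \<Rightarrow> ('w \<Rightarrow> 'u set) \<Rightarrow> (string \<Rightarrow> 'u list \<Rightarrow> 'u)
     \<Rightarrow> ('w \<Rightarrow> psym \<Rightarrow> 'u list \<Rightarrow> bool) \<Rightarrow> 'w \<Rightarrow> (var \<Rightarrow> 'u) \<Rightarrow> frm \<Rightarrow> bool" where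
  "forces le D fn I w e Bot = False"
| "forces le D fn I w e (Atom P ts) = I w P (map (evalt fn e) ts)"
| "forces le D fn I w e (Neg a) = (\<forall>v. le w v \<longrightarrow> \<not> forces le D fn I v e a)"
| "forces le D fn I w e (Conj a b) = (forces le D fn I w e a \<and> forces le D fn I w e b)"
| "forces le D fn I w e (Disj a b) = (forces le D fn I w e a \<or> forces le D fn I w e b)"
| "forces le D fn I w e (Imp a b) =
     (\<forall>v. le w v \<longrightarrow> forces le D fn I v e a \<longrightarrow> forces le D fn I v e b)"
| "forces le D fn I w e (All x a) =
     (\<forall>v. le w v \<longrightarrow> (\<forall>d\<in>D v. forces le D fn I v (e(x := d)) a))"
| "forces le D fn I w e (Ex x a) = (\<exists>d\<in>D w. forces le D fn I w (e(x := d)) a)"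

end

theory Submission
  imports Defs
begin

definition Nf :: "('w \<Rightarrow> 'w \<Rightarrow> bool) \<Rightarrow> ('w \<Rightarrow> 'e \<Rightarrow> bool) \<Rightarrow> 'w \<Rightarrow> 'e \<Rightarrow> bool" where
  "Nf le a v e = (\<forall>u. le v u \<longrightarrow> \<not> a u e)"

definition Rs where
  "Rs le env nng x a c = (\<forall>v e. le x v \<longrightarrow> env v e \<longrightarrow> nng v e \<longrightarrow> a v e \<longrightarrow> c v e)"

definition Rd where
  "Rd le env nng x bX bY aX aY = (\<forall>v e. le x v \<longrightarrow> env v e \<longrightarrow> nng v e \<longrightarrow>
      (bX v e \<or> Nf le bX v e) \<longrightarrow> (bY v e \<or> Nf le bY v e) \<longrightarrow> aX v e \<or> aY v e)"

lemma abstract: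
  assumes refl: "\<And>v. le v v" and trans: "\<And>u v z. le u v \<Longrightarrow> le v z \<Longrightarrow> le u z"
    and envm: "\<And>v u e. le v u \<Longrightarrow> env v e \<Longrightarrow> env u e"
    and nngm: "\<And>v u e. le v u \<Longrightarrow> nng v e \<Longrightarrow> nng u e"
    and a1m: "\<And>v u e. le v u \<Longrightarrow> a1 v e \<Longrightarrow> a1 u e"
    and b1m: "\<And>v u e. le v u \<Longrightarrow> b1 v e \<Longrightarrow> b1 u e"
    and a2m: "\<And>v u e. le v u \<Longrightarrow> a2 v e \<Longrightarrow> a2 u e"
    and b2m: "\<And>v u e. le v u \<Longrightarrow> b2 v e \<Longrightarrow> b2 u e"
    and c11: "\<And>v e. le w v \<Longrightarrow> env v e \<Longrightarrow> \<not> (a1 v e \<and> b1 v e)"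
    and c12: "\<And>v e. le w v \<Longrightarrow> env v e \<Longrightarrow> \<not> (Nf le a1 v e \<and> Nf le b1 v e)"
    and c21: "\<And>v e. le w v \<Longrightarrow> env v e \<Longrightarrow> \<not> (a2 v e \<and> b2 v e)"
    and c22: "\<And>v e. le w v \<Longrightarrow> env v e \<Longrightarrow> \<not> (Nf le a2 v e \<and> Nf le b2 v e)"
    and wx: "le w x"
  shows "(Rs le env nng x a1 a2 \<and> Rs le env nng x a2 a1 \<and> Rs le env nng x b1 b2 \<and> Rs le env nng x b2 b1)
     \<longleftrightarrow> (Rd le env nng x b1 a2 a1 b2 \<and> Rd le env nng x a1 b2 b1 a2)"
proof
  assume H: "Rs le env nng x a1 a2 \<and> Rs le env nng x a2 a1 \<and> Rs le env nng x b1 b2 \<and> Rs le env nng x b2 b1"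
  have R1: "Rd le env nng x b1 a2 a1 b2"
    unfolding Rd_def
  proof (intro allI impI)
    fix v e assume v: "le x v" "env v e" "nng v e" and d1: "b1 v e \<or> Nf le b1 v e"
      and d2: "a2 v e \<or> Nf le a2 v e"
    show "a1 v e \<or> b2 v e"
    proof (cases "a2 v e")
      case True then show ?thesis using H v unfolding Rs_def by blast
    next
      case F: False
      with d2 have na2: "Nf le a2 v e" by blast
      show ?thesis
      proof (cases "b1 v e")
        case True then show ?thesis using H v unfolding Rs_def by blast
      next
        case False
        with d1 have nb1: "Nf le b1 v e" by blast
        have "Nf le a1 v e" unfolding Nf_def
        proof (intro allI impI notI)
          fix u assume u: "le v u" "a1 u e"
          have "le x u" using trans v(1) u(1) .
          then have "a2 u e" using H u envm[OF u(1) v(2)] nngm[OF u(1) v(3)] unfolding Rs_def by blast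
          then show False using na2 u unfolding Nf_def by blast
        qed
        then show ?thesis using c12[OF trans[OF wx v(1)] v(2)] nb1 by blast
      qed
    qed
  qed
  have R2: "Rd le env nng x a1 b2 b1 a2"
    unfolding Rd_def
  proof (intro allI impI)
    fix v e assume v: "le x v" "env v e" "nng v e" and d1: "a1 v e \<or> Nf le a1 v e"
      and d2: "b2 v e \<or> Nf le b2 v e"
    show "b1 v e \<or> a2 v e"
    proof (cases "a1 v e")
      case True then show ?thesis using H v unfolding Rs_def by blast
    next
      case F: False
      with d1 have na1: "Nf le a1 v e" by blast
      show ?thesis
      proof (cases "b2 v e")
        case True then show ?thesis using H v unfolding Rs_def by blast
      next
        case False
        with d2 have nb2: "Nf le b2 v e" by blast
        have "Nf le a2 v e" unfolding Nf_def
        proof (intro allI impI notI)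
          fix u assume u: "le v u" "a2 u e"
          have "le x u" using trans v(1) u(1) .
          then have "a1 u e" using H u envm[OF u(1) v(2)] nngm[OF u(1) v(3)] unfolding Rs_def by blast
          then show False using na1 u unfolding Nf_def by blast
        qed
        then show ?thesis using c22[OF trans[OF wx v(1)] v(2)] nb2 by blast
      qed
    qed
  qed
  show "Rd le env nng x b1 a2 a1 b2 \<and> Rd le env nng x a1 b2 b1 a2" using R1 R2 by blast
next
  assume H: "Rd le env nng x b1 a2 a1 b2 \<and> Rd le env nng x a1 b2 b1 a2"
  then have H1: "\<And>v e. le x v \<Longrightarrow> env v e \<Longrightarrow> nng v e \<Longrightarrow>
      (b1 v e \<or> Nf le b1 v e) \<Longrightarrow> (a2 v e \<or> Nf le a2 v e) \<Longrightarrow> a1 v e \<or> b2 v e"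
   and H2: "\<And>v e. le x v \<Longrightarrow> env v e \<Longrightarrow> nng v e \<Longrightarrow>
      (a1 v e \<or> Nf le a1 v e) \<Longrightarrow> (b2 v e \<or> Nf le b2 v e) \<Longrightarrow> b1 v e \<or> a2 v e"
    unfolding Rd_def by blast+
  have lw: "\<And>v. le x v \<Longrightarrow> le w v" using trans wx by blast
  have "Rs le env nng x a1 a2" unfolding Rs_def
  proof (intro allI impI)
    fix v e assume v: "le x v" "env v e" "nng v e" "a1 v e"
    have "Nf le b2 v e" unfolding Nf_def
    proof (intro allI impI notI)
      fix u assume u: "le v u" "b2 u e"
      have "b1 u e \<or> a2 u e" using H2[OF trans[OF v(1) u(1)] envm[OF u(1) v(2)] nngm[OF u(1) v(3)]]
        a1m[OF u(1) v(4)] u(2) by blast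
      then show False using c11 c21 lw[OF trans[OF v(1) u(1)]] envm[OF u(1) v(2)] a1m[OF u(1) v(4)] u(2) by blast
    qed
    then have "b1 v e \<or> a2 v e" using H2[OF v(1-3)] v(4) by blast
    then show "a2 v e" using c11 lw[OF v(1)] v by blast
  qed
  moreover have "Rs le env nng x a2 a1" unfolding Rs_def
  proof (intro allI impI)
    fix v e assume v: "le x v" "env v e" "nng v e" "a2 v e"
    have "Nf le b1 v e" unfolding Nf_def
    proof (intro allI impI notI)
      fix u assume u: "le v u" "b1 u e"
      have "a1 u e \<or> b2 u e" using H1[OF trans[OF v(1) u(1)] envm[OF u(1) v(2)] nngm[OF u(1) v(3)]]
        a2m[OF u(1) v(4)] u(2) by blast
      then show False using c11 c21 lw[OF trans[OF v(1) u(1)]] envm[OF u(1) v(2)] a2m[OF u(1) v(4)] u(2) by blast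
    qed
    then have "a1 v e \<or> b2 v e" using H1[OF v(1-3)] v(4) by blast
    then show "a1 v e" using c21 lw[OF v(1)] v by blast
  qed
  moreover have "Rs le env nng x b1 b2" unfolding Rs_def
  proof (intro allI impI)
    fix v e assume v: "le x v" "env v e" "nng v e" "b1 v e"
    have "Nf le a2 v e" unfolding Nf_def
    proof (intro allI impI notI)
      fix u assume u: "le v u" "a2 u e"
      have "a1 u e \<or> b2 u e" using H1[OF trans[OF v(1) u(1)] envm[OF u(1) v(2)] nngm[OF u(1) v(3)]]
        b1m[OF u(1) v(4)] u(2) by blast
      then show False using c11 c21 lw[OF trans[OF v(1) u(1)]] envm[OF u(1) v(2)] b1m[OF u(1) v(4)] u(2) by blast
    qed
    then have "a1 v e \<or> b2 v e" using H1[OF v(1-3)] v(4) by blast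
    then show "b2 v e" using c11 lw[OF v(1)] v by blast
  qed
  moreover have "Rs le env nng x b2 b1" unfolding Rs_def
  proof (intro allI impI)
    fix v e assume v: "le x v" "env v e" "nng v e" "b2 v e"
    have "Nf le a1 v e" unfolding Nf_def
    proof (intro allI impI notI)
      fix u assume u: "le v u" "a1 u e"
      have "b1 u e \<or> a2 u e" using H2[OF trans[OF v(1) u(1)] envm[OF u(1) v(2)] nngm[OF u(1) v(3)]]
        b2m[OF u(1) v(4)] u(2) by blast
      then show False using c11 c21 lw[OF trans[OF v(1) u(1)]] envm[OF u(1) v(2)] b2m[OF u(1) v(4)] u(2) by blast
    qed
    then have "b1 v e \<or> a2 v e" using H2[OF v(1-3)] v(4) by blast
    then show "b1 v e" using c21 lw[OF v(1)] v by blast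
  qed
  ultimately show "Rs le env nng x a1 a2 \<and> Rs le env nng x a2 a1 \<and> Rs le env nng x b1 b2 \<and> Rs le env nng x b2 b1"
    by blast
qed


lemma finite_fvt: "finite (fvt t)"
  by (induction t) auto

lemma finite_fv: "finite (fv a)"
  by (induction a) (auto simp: finite_fvt)

lemma evalt_agree: "(\<forall>x\<in>fvt t. e x = e' x) \<Longrightarrow> evalt fn e t = evalt fn e' t"
proof (induction t)
  case (Fn f ts)
  then have "map (evalt fn e) ts = map (evalt fn e') ts" by (auto intro!: map_cong)
  then show ?case by (simp only: evalt.simps)
qed auto

lemma forces_agree:
  "(\<forall>x\<in>fv a. e x = e' x) \<Longrightarrow> forces le D fn I w e a = forces le D fn I w e' a"
proof (induction a arbitrary: w e e')
  case (Atom P ts)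
  have "\<And>t. t \<in> set ts \<Longrightarrow> evalt fn e t = evalt fn e' t"
    using Atom by (intro evalt_agree) auto
  then have "map (evalt fn e) ts = map (evalt fn e') ts"
    by (rule map_cong[OF refl])
  then show ?case by (simp only: forces.simps)
next
  case (All x a)
  have "\<And>v d. forces le D fn I v (e(x:=d)) a = forces le D fn I v (e'(x:=d)) a"
    using All.prems by (intro All.IH) auto
  then show ?case by (simp only: forces.simps)
next
  case (Ex x a)
  have "\<And>v d. forces le D fn I v (e(x:=d)) a = forces le D fn I v (e'(x:=d)) a"
    using Ex.prems by (intro Ex.IH) auto
  then show ?case by (simp only: forces.simps)
next
  case (Neg a) then show ?case by (simp only: forces.simps fv.simps)
next
  case (Conj a b)
  have "forces le D fn I v e a = forces le D fn I v e' a" "forces le D fn I v e b = forces le D fn I v e' b" for v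
    using Conj.prems by (intro Conj.IH; auto)+
  then show ?case by (simp only: forces.simps)
next
  case (Disj a b)
  have "forces le D fn I v e a = forces le D fn I v e' a" "forces le D fn I v e b = forces le D fn I v e' b" for v
    using Disj.prems by (intro Disj.IH; auto)+
  then show ?case by (simp only: forces.simps)
next
  case (Imp a b)
  have "forces le D fn I v e a = forces le D fn I v e' a" "forces le D fn I v e b = forces le D fn I v e' b" for v
    using Imp.prems by (intro Imp.IH; auto)+
  then show ?case by (simp only: forces.simps)
qed simp


fun litA :: "lit \<Rightarrow> psym \<times> trm list" where
  "litA (PosL p ts) = (p, ts)"
| "litA (NegL p ts) = (hat p, ts)"

fun litB :: "lit \<Rightarrow> psym \<times> trm list" where
  "litB (PosL p ts) = (hat p, ts)"
| "litB (NegL p ts) = (p, ts)"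

definition atm :: "('w \<Rightarrow> psym \<Rightarrow> 'u list \<Rightarrow> bool) \<Rightarrow> (string \<Rightarrow> 'u list \<Rightarrow> 'u)
   \<Rightarrow> psym \<times> trm list \<Rightarrow> 'w \<Rightarrow> (var \<Rightarrow> 'u) \<Rightarrow> bool" where
  "atm I fn pt v e = I v (fst pt) (map (evalt fn e) (snd pt))"

lemma conj_list_mem: "forces le D fn I w e (conj_list xs) \<Longrightarrow> x \<in> set xs \<Longrightarrow> forces le D fn I w e x"
  by (induction xs rule: conj_list.induct) auto

context
  fixes le :: "'w \<Rightarrow> 'w \<Rightarrow> bool" and D :: "'w \<Rightarrow> 'u set"
    and fn :: "string \<Rightarrow> 'u list \<Rightarrow> 'u" and I :: "'w \<Rightarrow> psym \<Rightarrow> 'u list \<Rightarrow> bool"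
  assumes km: "kripke_model le D fn I"
begin

lemma km_refl: "le v v" using km unfolding kripke_model_def by blast
lemma km_trans: "le u v \<Longrightarrow> le v z \<Longrightarrow> le u z" using km unfolding kripke_model_def by blast
lemma km_ne: "D v \<noteq> {}" using km unfolding kripke_model_def by blast
lemma km_D: "le w v \<Longrightarrow> D w \<subseteq> D v" using km unfolding kripke_model_def by blast
lemma km_fn: "set as \<subseteq> D w \<Longrightarrow> fn f as \<in> D w" using km unfolding kripke_model_def by blast
lemma km_I: "le w v \<Longrightarrow> I w P as \<Longrightarrow> I v P as" using km unfolding kripke_model_def by blast

lemma evalt_D: "(\<forall>x. e x \<in> D w) \<Longrightarrow> evalt fn e t \<in> D w"
  by (induction t) (auto intro!: km_fn)

lemma persist: "le w v \<Longrightarrow> forces le D fn I w e a \<Longrightarrow> forces le D fn I v e a"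
proof (induction a arbitrary: w v e)
  case (Atom P ts) then show ?case by (auto intro: km_I)
next
  case (Neg a) then show ?case by (auto intro: km_trans)
next
  case (Imp a b) then show ?case by (auto intro: km_trans)
next
  case (All x a) then show ?case by (auto intro: km_trans)
next
  case (Ex x a) then show ?case using km_D by fastforce
qed auto

lemma foldr_All:
  "distinct xs \<Longrightarrow> forces le D fn I w e (foldr All xs a) \<longleftrightarrow>
    (\<forall>v e'. le w v \<longrightarrow> (\<forall>x\<in>set xs. e' x \<in> D v) \<longrightarrow> (\<forall>x. x \<notin> set xs \<longrightarrow> e' x = e x)
       \<longrightarrow> forces le D fn I v e' a)"
proof (induction xs arbitrary: w e)
  case Nil
  show ?case
  proof
    assume "forces le D fn I w e (foldr All [] a)"
    then show "\<forall>v e'. le w v \<longrightarrow> (\<forall>x\<in>set []. e' x \<in> D v) \<longrightarrow> (\<forall>x. x \<notin> set [] \<longrightarrow> e' x = e x)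
       \<longrightarrow> forces le D fn I v e' a"
    proof (intro allI impI)
      fix v e' assume "forces le D fn I w e (foldr All [] a)" "le w v" "\<forall>x\<in>set []. e' x \<in> D v"
        "\<forall>x. x \<notin> set [] \<longrightarrow> e' x = e x"
      then have "e' = e" by (intro ext) simp
      moreover have "forces le D fn I w e a" using \<open>forces le D fn I w e (foldr All [] a)\<close> by simp
      ultimately have "e' = e" "forces le D fn I w e a" by auto
      then show "forces le D fn I v e' a" using persist \<open>le w v\<close> by blast
    qed
  next
    assume "\<forall>v e'. le w v \<longrightarrow> (\<forall>x\<in>set []. e' x \<in> D v) \<longrightarrow> (\<forall>x. x \<notin> set [] \<longrightarrow> e' x = e x)
       \<longrightarrow> forces le D fn I v e' a"
    then have "forces le D fn I w e a" using km_refl[of w] by (metis empty_iff list.set(1))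
    then show "forces le D fn I w e (foldr All [] a)" by simp
  qed
next
  case (Cons y xs)
  then have IH: "\<And>w e. forces le D fn I w e (foldr All xs a) \<longleftrightarrow>
    (\<forall>v e'. le w v \<longrightarrow> (\<forall>x\<in>set xs. e' x \<in> D v) \<longrightarrow> (\<forall>x. x \<notin> set xs \<longrightarrow> e' x = e x)
       \<longrightarrow> forces le D fn I v e' a)" and yn: "y \<notin> set xs" by auto
  show ?case
  proof
    assume H: "forces le D fn I w e (foldr All (y # xs) a)"
    show "\<forall>v e'. le w v \<longrightarrow> (\<forall>x\<in>set (y # xs). e' x \<in> D v) \<longrightarrow> (\<forall>x. x \<notin> set (y # xs) \<longrightarrow> e' x = e x)
       \<longrightarrow> forces le D fn I v e' a"
    proof (intro allI impI)
      fix v e' assume v: "le w v" "\<forall>x\<in>set (y # xs). e' x \<in> D v" "\<forall>x. x \<notin> set (y # xs) \<longrightarrow> e' x = e x"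
      have "e' y \<in> D v" using v(2) by simp
      then have "forces le D fn I v (e(y := e' y)) (foldr All xs a)" using H v(1) by simp
      then have H2: "\<forall>u e''. le v u \<longrightarrow> (\<forall>x\<in>set xs. e'' x \<in> D u) \<longrightarrow> (\<forall>x. x \<notin> set xs \<longrightarrow> e'' x = (e(y := e' y)) x)
       \<longrightarrow> forces le D fn I u e'' a" unfolding IH .
      have "\<forall>x. x \<notin> set xs \<longrightarrow> e' x = (e(y := e' y)) x" using v(3) by simp
      moreover have "\<forall>x\<in>set xs. e' x \<in> D v" using v(2) by simp
      ultimately show "forces le D fn I v e' a" using H2 km_refl by blast
    qed
  next
    assume H: "\<forall>v e'. le w v \<longrightarrow> (\<forall>x\<in>set (y # xs). e' x \<in> D v) \<longrightarrow> (\<forall>x. x \<notin> set (y # xs) \<longrightarrow> e' x = e x)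
       \<longrightarrow> forces le D fn I v e' a"
    show "forces le D fn I w e (foldr All (y # xs) a)"
    proof (simp, intro allI impI ballI)
      fix v d assume v: "le w v" "d \<in> D v"
      show "forces le D fn I v (e(y := d)) (foldr All xs a)"
        unfolding IH
      proof (intro allI impI)
        fix u e' assume u: "le v u" "\<forall>x\<in>set xs. e' x \<in> D u" "\<forall>x. x \<notin> set xs \<longrightarrow> e' x = (e(y := d)) x"
        have "e' y = d" using u(3) yn by simp
        then have "e' y \<in> D u" using km_D[OF u(1)] v(2) by blast
        then have "\<forall>x\<in>set (y # xs). e' x \<in> D u" using u(2) by simp
        moreover have "\<forall>x. x \<notin> set (y # xs) \<longrightarrow> e' x = e x" using u(3) by simp
        ultimately show "forces le D fn I u e' a"
          using H km_trans[OF v(1) u(1)] by blast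
      qed
    qed
  qed
qed

lemma uclose_sem:
  "forces le D fn I w e (uclose a) \<longleftrightarrow> (\<forall>v e'. le w v \<longrightarrow> (\<forall>x. e' x \<in> D v) \<longrightarrow> forces le D fn I v e' a)"
proof -
  have S: "set (sorted_list_of_set (fv a)) = fv a" using finite_fv by simp
  show ?thesis
    unfolding uclose_def foldr_All[OF distinct_sorted_list_of_set] S
  proof (intro iffI allI impI)
    fix v and e' :: "var \<Rightarrow> 'u" assume H: "\<forall>v e'. le w v \<longrightarrow> (\<forall>x\<in>fv a. e' x \<in> D v) \<longrightarrow> (\<forall>x. x \<notin> fv a \<longrightarrow> e' x = e x)
       \<longrightarrow> forces le D fn I v e' a" and v: "le w v" "\<forall>x. e' x \<in> D v"
    have "forces le D fn I v (\<lambda>x. if x \<in> fv a then e' x else e x) a"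
      using H v by auto
    then show "forces le D fn I v e' a" using forces_agree[of a "\<lambda>x. if x \<in> fv a then e' x else e x" e' le D fn I v] by simp
  next
    fix v and e' :: "var \<Rightarrow> 'u" assume H: "\<forall>v e'. le w v \<longrightarrow> (\<forall>x. e' x \<in> D v) \<longrightarrow> forces le D fn I v e' a"
      and v: "le w v" "\<forall>x\<in>fv a. e' x \<in> D v" "\<forall>x. x \<notin> fv a \<longrightarrow> e' x = e x"
    obtain d0 where d0: "d0 \<in> D v" using km_ne by blast
    have "forces le D fn I v (\<lambda>x. if x \<in> fv a then e' x else d0) a"
      using H v d0 by auto
    then show "forces le D fn I v e' a" using forces_agree[of a "\<lambda>x. if x \<in> fv a then e' x else d0" e' le D fn I v] by simp
  qed
qed

lemma uclose_imp:
  "forces le D fn I w e (uclose (Imp a b)) \<longleftrightarrow>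
    (\<forall>v e'. le w v \<longrightarrow> (\<forall>x. e' x \<in> D v) \<longrightarrow> forces le D fn I v e' a \<longrightarrow> forces le D fn I v e' b)"
  unfolding uclose_sem
proof (intro iffI allI impI)
  fix v and e' :: "var \<Rightarrow> 'u" assume H: "\<forall>v e'. le w v \<longrightarrow> (\<forall>x. e' x \<in> D v) \<longrightarrow> forces le D fn I v e' (Imp a b)"
    and v: "le w v" "\<forall>x. e' x \<in> D v" "forces le D fn I v e' a"
  then show "forces le D fn I v e' b" using km_refl by auto
next
  fix v and e' :: "var \<Rightarrow> 'u" assume H: "\<forall>v e'. le w v \<longrightarrow> (\<forall>x. e' x \<in> D v) \<longrightarrow> forces le D fn I v e' a \<longrightarrow> forces le D fn I v e' b"
    and v: "le w v" "\<forall>x. e' x \<in> D v"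
  show "forces le D fn I v e' (Imp a b)"
  proof (simp, intro allI impI)
    fix u assume "le v u" "forces le D fn I u e' a"
    then show "forces le D fn I u e' b" using H v km_trans km_D by blast
  qed
qed


lemma trs_sem:
  "forces le D fn I x e (tr_s L1 L2 G) \<longleftrightarrow>
    (Rs le (\<lambda>v e. \<forall>y. e y \<in> D v) (\<lambda>v e. forces le D fn I v e (Neg (Neg G))) x (atm I fn (litA L1)) (atm I fn (litA L2)) \<and>
     Rs le (\<lambda>v e. \<forall>y. e y \<in> D v) (\<lambda>v e. forces le D fn I v e (Neg (Neg G))) x (atm I fn (litA L2)) (atm I fn (litA L1)) \<and>
     Rs le (\<lambda>v e. \<forall>y. e y \<in> D v) (\<lambda>v e. forces le D fn I v e (Neg (Neg G))) x (atm I fn (litB L1)) (atm I fn (litB L2)) \<and>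
     Rs le (\<lambda>v e. \<forall>y. e y \<in> D v) (\<lambda>v e. forces le D fn I v e (Neg (Neg G))) x (atm I fn (litB L2)) (atm I fn (litB L1)))"
  by (cases L1; cases L2) (simp only: tr_s.simps litA.simps litB.simps conj_list.simps rclause_def uclose_imp Rs_def atm_def forces.simps fst_conv snd_conv conj_imp_eq_imp_imp; blast)+

lemma trd1_sem:
  "forces le D fn I x e (tr_d [L1, compl L2] G) \<longleftrightarrow>
    Rd le (\<lambda>v e. \<forall>y. e y \<in> D v) (\<lambda>v e. forces le D fn I v e (Neg (Neg G))) x
      (atm I fn (litB L1)) (atm I fn (litA L2)) (atm I fn (litA L1)) (atm I fn (litB L2))"
  by (cases L1; cases L2) (simp only: tr_d_def uclose_imp compl.simps pos_atoms.simps neg_atoms.simps list.map append.simps conj_list.simps disj_list.simps prod.case forces.simps litA.simps litB.simps atm_def fst_conv snd_conv Rd_def Nf_def conj_imp_eq_imp_imp; blast)+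

lemma trd2_sem:
  "forces le D fn I x e (tr_d [compl L1, L2] G) \<longleftrightarrow>
    Rd le (\<lambda>v e. \<forall>y. e y \<in> D v) (\<lambda>v e. forces le D fn I v e (Neg (Neg G))) x
      (atm I fn (litA L1)) (atm I fn (litB L2)) (atm I fn (litB L1)) (atm I fn (litA L2))"
  by (cases L1; cases L2) (simp only: tr_d_def uclose_imp compl.simps pos_atoms.simps neg_atoms.simps list.map append.simps conj_list.simps disj_list.simps prod.case forces.simps litA.simps litB.simps atm_def fst_conv snd_conv Rd_def Nf_def conj_imp_eq_imp_imp; blast)+


lemma cc_lit:
  assumes L: "lit_in ps L" and C: "forces le D fn I w e (CC ps)" and v: "le w v" "\<forall>y. e' y \<in> D v"
  shows "\<not> (atm I fn (litA L) v e' \<and> atm I fn (litB L) v e')"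
    and "\<not> (Nf le (atm I fn (litA L)) v e' \<and> Nf le (atm I fn (litB L)) v e')"
proof -
  obtain n ts where nt: "(n, length ts) \<in> set ps" and
    AB: "(litA L = (Orig n (length ts), ts) \<and> litB L = (Hat n (length ts), ts)) \<or>
         (litA L = (Hat n (length ts), ts) \<and> litB L = (Orig n (length ts), ts))"
    using L by (cases L) auto
  define k where "k = length ts"
  define as where "as = map (evalt fn e') ts"
  have len: "length as = k" by (simp add: as_def k_def)
  have asD: "set as \<subseteq> D v" using evalt_D v(2) by (auto simp: as_def)
  let ?F = "Conj (foldr All [0..<k] (Neg (Conj (Atom (Orig n k) (map Var [0..<k]))
                                         (Atom (Hat n k) (map Var [0..<k])))))
           (foldr All [0..<k] (Neg (Conj (Neg (Atom (Orig n k) (map Var [0..<k])))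
                                         (Neg (Atom (Hat n k) (map Var [0..<k]))))))"
  have mem: "?F \<in> set (map (\<lambda>(n, k).
      Conj (foldr All [0..<k] (Neg (Conj (Atom (Orig n k) (map Var [0..<k]))
                                         (Atom (Hat n k) (map Var [0..<k])))))
           (foldr All [0..<k] (Neg (Conj (Neg (Atom (Orig n k) (map Var [0..<k])))
                                         (Neg (Atom (Hat n k) (map Var [0..<k]))))))) ps)"
    using nt unfolding k_def by force
  have F: "forces le D fn I w e ?F"
    using conj_list_mem[OF C[unfolded CC_def] mem] .
  define e'' where "e'' = (\<lambda>x. if x < k then as ! x else e x)"
  have mapv: "map (evalt fn e'') (map Var [0..<k]) = as"
    by (rule nth_equalityI) (auto simp: e''_def len)
  have e''D: "\<forall>x\<in>set [0..<k]. e'' x \<in> D v" using asD len by (auto simp: e''_def)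
  have e''o: "\<forall>x. x \<notin> set [0..<k] \<longrightarrow> e'' x = e x" by (simp add: e''_def)
  have F1: "forces le D fn I v e'' (Neg (Conj (Atom (Orig n k) (map Var [0..<k]))
                                         (Atom (Hat n k) (map Var [0..<k]))))"
    using F e''D e''o v(1) unfolding forces.simps(4) foldr_All[OF distinct_upt] by blast
  have F2: "forces le D fn I v e'' (Neg (Conj (Neg (Atom (Orig n k) (map Var [0..<k])))
                                         (Neg (Atom (Hat n k) (map Var [0..<k])))))"
    using F e''D e''o v(1) unfolding forces.simps(4) foldr_All[OF distinct_upt] by blast
  have G1: "\<not> (I v (Orig n k) as \<and> I v (Hat n k) as)"
    using F1 km_refl unfolding forces.simps mapv by blast
  have G2: "\<not> ((\<forall>u. le v u \<longrightarrow> \<not> I u (Orig n k) as) \<and> (\<forall>u. le v u \<longrightarrow> \<not> I u (Hat n k) as))"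
    using F2 km_refl unfolding forces.simps mapv by blast
  show "\<not> (atm I fn (litA L) v e' \<and> atm I fn (litB L) v e')"
    using AB G1 by (auto simp: atm_def as_def k_def)
  show "\<not> (Nf le (atm I fn (litA L)) v e' \<and> Nf le (atm I fn (litB L)) v e')"
    using AB G2 by (auto simp: atm_def as_def k_def Nf_def)
qed

end


theorem lemma11:
  fixes ps :: "(string \<times> nat) list"
    and L1 L2 :: lit and G :: frm
    and le :: "'w \<Rightarrow> 'w \<Rightarrow> bool" and D :: "'w \<Rightarrow> 'u set"
    and fn :: "string \<Rightarrow> 'u list \<Rightarrow> 'u" and I :: "'w \<Rightarrow> psym \<Rightarrow> 'u list \<Rightarrow> bool"
  assumes "no_imp G" and "no_hat G"
    and "lit_in ps L1" and "lit_in ps L2"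
    and "kripke_model le D fn I"
    and "\<forall>x. e x \<in> D w"
    and "forces le D fn I w e (CC ps)"
  shows "forces le D fn I w e
           (Iff (tr_s L1 L2 G) (Conj (tr_d [L1, compl L2] G) (tr_d [compl L1, L2] G)))"
proof -
  note km = assms(5)
  have am: "\<And>v u e p. le v u \<Longrightarrow> atm I fn p v e \<Longrightarrow> atm I fn p u e"
    unfolding atm_def by (rule km_I[OF km])
  have EQ: "\<And>x. le w x \<Longrightarrow>
    (Rs le (\<lambda>v e. \<forall>y. e y \<in> D v) (\<lambda>v e. forces le D fn I v e (Neg (Neg G))) x (atm I fn (litA L1)) (atm I fn (litA L2)) \<and>
     Rs le (\<lambda>v e. \<forall>y. e y \<in> D v) (\<lambda>v e. forces le D fn I v e (Neg (Neg G))) x (atm I fn (litA L2)) (atm I fn (litA L1)) \<and>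
     Rs le (\<lambda>v e. \<forall>y. e y \<in> D v) (\<lambda>v e. forces le D fn I v e (Neg (Neg G))) x (atm I fn (litB L1)) (atm I fn (litB L2)) \<and>
     Rs le (\<lambda>v e. \<forall>y. e y \<in> D v) (\<lambda>v e. forces le D fn I v e (Neg (Neg G))) x (atm I fn (litB L2)) (atm I fn (litB L1)))
    \<longleftrightarrow> (Rd le (\<lambda>v e. \<forall>y. e y \<in> D v) (\<lambda>v e. forces le D fn I v e (Neg (Neg G))) x
      (atm I fn (litB L1)) (atm I fn (litA L2)) (atm I fn (litA L1)) (atm I fn (litB L2)) \<and>
      Rd le (\<lambda>v e. \<forall>y. e y \<in> D v) (\<lambda>v e. forces le D fn I v e (Neg (Neg G))) x
      (atm I fn (litA L1)) (atm I fn (litB L2)) (atm I fn (litB L1)) (atm I fn (litA L2)))"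
  proof (rule abstract)
    show "\<And>v. le v v" by (rule km_refl[OF km])
    show "\<And>u v z. le u v \<Longrightarrow> le v z \<Longrightarrow> le u z" by (rule km_trans[OF km])
    show "\<And>v u e. le v u \<Longrightarrow> \<forall>y. e y \<in> D v \<Longrightarrow> \<forall>y. e y \<in> D u" using km_D[OF km] by blast
    show "\<And>v u e. le v u \<Longrightarrow> forces le D fn I v e (Neg (Neg G)) \<Longrightarrow> forces le D fn I u e (Neg (Neg G))"
      using km_trans[OF km] by (simp only: forces.simps) blast
    show "\<And>v u e. le v u \<Longrightarrow> atm I fn (litA L1) v e \<Longrightarrow> atm I fn (litA L1) u e" by (rule am)
    show "\<And>v u e. le v u \<Longrightarrow> atm I fn (litB L1) v e \<Longrightarrow> atm I fn (litB L1) u e" by (rule am)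
    show "\<And>v u e. le v u \<Longrightarrow> atm I fn (litA L2) v e \<Longrightarrow> atm I fn (litA L2) u e" by (rule am)
    show "\<And>v u e. le v u \<Longrightarrow> atm I fn (litB L2) v e \<Longrightarrow> atm I fn (litB L2) u e" by (rule am)
    show "\<And>v e. le w v \<Longrightarrow> \<forall>y. e y \<in> D v \<Longrightarrow> \<not> (atm I fn (litA L1) v e \<and> atm I fn (litB L1) v e)"
      by (rule cc_lit(1)[OF km assms(3) assms(7)])
    show "\<And>v e. le w v \<Longrightarrow> \<forall>y. e y \<in> D v \<Longrightarrow> \<not> (Nf le (atm I fn (litA L1)) v e \<and> Nf le (atm I fn (litB L1)) v e)"
      by (rule cc_lit(2)[OF km assms(3) assms(7)])
    show "\<And>v e. le w v \<Longrightarrow> \<forall>y. e y \<in> D v \<Longrightarrow> \<not> (atm I fn (litA L2) v e \<and> atm I fn (litB L2) v e)"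
      by (rule cc_lit(1)[OF km assms(4) assms(7)])
    show "\<And>v e. le w v \<Longrightarrow> \<forall>y. e y \<in> D v \<Longrightarrow> \<not> (Nf le (atm I fn (litA L2)) v e \<and> Nf le (atm I fn (litB L2)) v e)"
      by (rule cc_lit(2)[OF km assms(4) assms(7)])
  qed
  have K: "forces le D fn I v e (tr_s L1 L2 G) \<longleftrightarrow>
      forces le D fn I v e (Conj (tr_d [L1, compl L2] G) (tr_d [compl L1, L2] G))" if v: "le w v" for v
  proof -
    note E = EQ[OF v] trs_sem[OF km, of v e L1 L2 G] trd1_sem[OF km, of v e L1 L2 G] trd2_sem[OF km, of v e L1 L2 G]
    show ?thesis unfolding forces.simps(4) E(2,3,4) E(1) ..
  qed
  show ?thesis
    unfolding Iff_def forces.simps(4) forces.simps(6) using K by (simp only: forces.simps(4)) blast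
qed

end
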